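(* Let $m,n\ge 1$ be integers, let $r_b,r_w\ge 0$, and let $R_{th0}>0$ satisfy $R_{th0}>m r_b+n r_w$. Write $d_{ij}=i r_b+j r_w$ for $1\le i\le m$, $1\le j\le n$. Consider the equation in the unknown $R> m r_b + n r_w$: $$\ln(R_{th0})=\frac{1}{mn}\sum_{i=1}^{m}\sum_{j=1}^{n}\ln\big(R-d_{ij}\big). \qquad (\ast)$$ Define the sequence $(R^{(l)})_{l\ge 0}$ by $R^{(0)}=R_{th0}$ and, for $l\ge 1$, $$\ln\big(R^{(l)}\big)=\ln(R_{th0})-\frac{1}{mn}\sum_{i=1}^{m}\sum_{j=1}^{n}\ln\Big(1-\frac{d_{ij}}{R^{(l-1)}}\Big).$$ Then every $R^{(l)}$ is well defined (i.e. $R^{(l)}>m r_b+n r_w$), equation $(\ast)$ has a solution $R_{th\_array}$ in $(m r_b+n r_w,\infty)$, and the sequence $R^{(l)}$ converges to $R_{th\_array}$ as $l\to\infty$.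
   Context: This iteration is called the STMC threshold solver algorithm in the paper (iterate until a fixed number of iterations or until successive iterates differ by at most a tolerance $\epsilon$). Here $R_{th0}$ plays the role of the optimal read resistance threshold in the absence of line resistance, $r_b$ and $r_w$ are the per-junction bitline and wordline resistances, and $(\ast)$ is the equation defining the common read threshold $R_{th\_array}$ for an $m\times n$ crossbar array. *)

theory Defs
  imports "HOL-Analysis.Analysis"
begin

definition dij :: "real \<Rightarrow> real \<Rightarrow> nat \<Rightarrow> nat \<Rightarrow> real" where
  "dij rb rw i j = real i * rb + real j * rw"

primrec stmc_iter :: "nat \<Rightarrow> nat \<Rightarrow> real \<Rightarrow> real \<Rightarrow> real \<Rightarrow> nat \<Rightarrow> real" where
  "stmc_iter m n rb rw Rth0 0 = Rth0"
| "stmc_iter m n rb rw Rth0 (Suc l) =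
     exp (ln Rth0 - (1 / (real m * real n)) *
       (\<Sum>i=1..m. \<Sum>j=1..n. ln (1 - dij rb rw i j / stmc_iter m n rb rw Rth0 l)))"

end

theory Submission
  imports Defs
begin

definition FF :: "nat \<Rightarrow> nat \<Rightarrow> real \<Rightarrow> real \<Rightarrow> real \<Rightarrow> real" where
  "FF m n rb rw R = (1 / (real m * real n)) * (\<Sum>i=1..m. \<Sum>j=1..n. ln (1 - dij rb rw i j / R))"
definition TT :: "nat \<Rightarrow> nat \<Rightarrow> real \<Rightarrow> real \<Rightarrow> real \<Rightarrow> real \<Rightarrow> real" where
  "TT m n rb rw Rth0 R = exp (ln Rth0 - FF m n rb rw R)"

lemma iter_Suc: "stmc_iter m n rb rw Rth0 (Suc l) = TT m n rb rw Rth0 (stmc_iter m n rb rw Rth0 l)"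
  by (simp add: TT_def FF_def)

lemma ln_conc:
  fixes s t :: real assumes "0 < s" "s \<le> t" "t < 1"
  shows "(1 - t) * ln s \<le> (1 - s) * ln t"
proof -
  have t0: "t > 0" using assms by linarith
  have h1: "ln s - ln t \<le> (s - t) / t"
    using ln_le_minus_one[of "s/t"] assms t0 by (simp add: ln_div diff_divide_distrib)
  have h2: "- ln t \<le> (1 - t) / t"
    using ln_le_minus_one[of "1/t"] t0 by (simp add: ln_div diff_divide_distrib)
  have "(1 - t) * (ln s - ln t) \<le> (1 - t) * ((s - t) / t)"
    using h1 assms by (intro mult_left_mono) auto
  moreover have "(t - s) * (- ln t) \<le> (t - s) * ((1 - t) / t)"
    using h2 assms by (intro mult_left_mono) auto
  moreover have "(1 - t) * ((s - t) / t) + (t - s) * ((1 - t) / t) = 0"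
    using t0 by (simp add: field_simps)
  ultimately show ?thesis by (simp add: algebra_simps)
qed

lemma mu_mono:
  fixes u v :: real assumes "1/2 \<le> u" "u \<le> v" "v < 1"
  shows "ln v * ln (1 - v) \<le> ln u * ln (1 - u)"
proof -
  have "(\<lambda>t. - (ln t * ln (1 - t))) u \<le> (\<lambda>t. - (ln t * ln (1 - t))) v"
  proof (rule deriv_nonneg_imp_mono[where g = "\<lambda>t. - (ln t * ln (1 - t))" and g' = "\<lambda>t. - (ln (1 - t) / t - ln t / (1 - t))"])
    fix t assume t: "t \<in> {u..v}"
    hence t0: "0 < t" "t < 1" using assms by auto
    show "((\<lambda>t. - (ln t * ln (1 - t))) has_real_derivative - (ln (1 - t) / t - ln t / (1 - t))) (at t)"
      using t0 by (auto intro!: derivative_eq_intros simp: field_simps)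
    have "(1 - t) * ln (1 - t) \<le> (1 - (1 - t)) * ln t"
      using t0 t assms by (intro ln_conc) auto
    hence "ln (1 - t) / t \<le> ln t / (1 - t)"
      using t0 by (simp add: field_simps)
    thus "0 \<le> - (ln (1 - t) / t - ln t / (1 - t))" by simp
  qed (use assms in auto)
  thus ?thesis by simp
qed

lemma mu_cmp:
  fixes X Y :: real assumes "0 < Y" "Y < X" "X < 1" "X + Y \<ge> 1"
  shows "ln X * ln (1 - X) \<le> ln Y * ln (1 - Y)"
proof (cases "Y \<ge> 1/2")
  case True thus ?thesis using mu_mono[of Y X] assms by auto
next
  case False
  have "ln X * ln (1 - X) \<le> ln (1 - Y) * ln (1 - (1 - Y))"
    using mu_mono[of "1 - Y" X] assms False by auto
  thus ?thesis by (simp add: mult.commute)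
qed

lemma key_ineq:
  fixes X Y e :: real assumes "0 < Y" "Y < X" "X < 1" "X + Y \<ge> 1" "0 \<le> e" "e \<le> 1"
  shows "ln X * ln (1 - e * X) \<le> ln Y * ln (1 - e * Y)"
proof -
  define \<Delta> where "\<Delta> = (\<lambda>t. ln Y * ln (1 - t * Y) - ln X * ln (1 - t * X))"
  define K where "K = X * ln X - Y * ln Y"
  define M where "M = X * Y * (ln X - ln Y)"
  define d' where "d' = (\<lambda>t. (K - t * M) / ((1 - t * X) * (1 - t * Y)))"
  have M0: "M > 0" unfolding M_def using assms by (auto intro!: mult_pos_pos)
  have der: "(\<Delta> has_real_derivative d' t) (at t)" if "0 \<le> t" "t \<le> 1" for t
  proof -
    have p1: "1 - t * X > 0" using that assms
      by (metis diff_gt_0_iff_gt less_eq_real_def mult_left_le_one_le mult_less_cancel_left1 order_le_less_trans zero_less_one)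
    have p2: "1 - t * Y > 0" using that assms
      by (metis diff_gt_0_iff_gt less_eq_real_def less_trans mult_left_le_one_le mult_less_cancel_left1 order_le_less_trans zero_less_one)
    have "(\<Delta> has_real_derivative (ln Y * (- Y / (1 - t * Y)) - ln X * (- X / (1 - t * X)))) (at t)"
      unfolding \<Delta>_def using p1 p2 by (auto intro!: derivative_eq_intros simp: field_simps)
    moreover have "ln Y * (- Y / (1 - t * Y)) - ln X * (- X / (1 - t * X)) = d' t"
      unfolding d'_def K_def M_def using p1 p2 by (simp add: field_simps)
    ultimately show ?thesis by simp
  qed
  have pos: "(1 - t * X) * (1 - t * Y) > 0" if "0 \<le> t" "t \<le> 1" for t
  proof -
    have "t * X < 1" using that assms
      by (metis less_eq_real_def mult_left_le_one_le order_le_less_trans)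
    moreover have "t * Y < 1" using that assms
      by (metis less_eq_real_def less_trans mult_left_le_one_le order_le_less_trans)
    ultimately show ?thesis by simp
  qed
  have D0: "\<Delta> 0 = 0" unfolding \<Delta>_def by simp
  have D1: "\<Delta> 1 \<ge> 0" unfolding \<Delta>_def using mu_cmp[OF assms(1-4)] by simp
  show ?thesis
  proof (cases "K - e * M \<ge> 0")
    case True
    have "\<Delta> 0 \<le> \<Delta> e"
    proof (rule deriv_nonneg_imp_mono[where g = \<Delta> and g' = d'])
      fix t assume t: "t \<in> {0..e}"
      show "(\<Delta> has_real_derivative d' t) (at t)" using t assms by (intro der) auto
      have "K - t * M \<ge> K - e * M" using t M0 by (intro diff_left_mono mult_right_mono) auto
      thus "0 \<le> d' t" unfolding d'_def using True pos[of t] t assms by (intro divide_nonneg_pos) auto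
    qed (use assms in auto)
    thus ?thesis using D0 unfolding \<Delta>_def by simp
  next
    case False
    have "\<Delta> 1 \<le> \<Delta> e"
    proof -
      have "(\<lambda>t. - \<Delta> t) e \<le> (\<lambda>t. - \<Delta> t) 1"
      proof (rule deriv_nonneg_imp_mono[where g = "\<lambda>t. - \<Delta> t" and g' = "\<lambda>t. - d' t"])
        fix t assume t: "t \<in> {e..1}"
        show "((\<lambda>t. - \<Delta> t) has_real_derivative - d' t) (at t)" using t assms by (intro der DERIV_minus) auto
        have "K - t * M \<le> K - e * M" using t M0 by (intro diff_left_mono mult_right_mono) auto
        hence "d' t \<le> 0" unfolding d'_def using False pos[of t] t assms by (intro divide_nonpos_pos) auto
        thus "0 \<le> - d' t" by simp
      qed (use assms in auto)
      thus ?thesis by simp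
    qed
    thus ?thesis using D1 unfolding \<Delta>_def by simp
  qed
qed


lemma sequentially_even_odd':
  assumes E: "eventually (\<lambda>n. P (2 * n)) sequentially" and O: "eventually (\<lambda>n. P (2 * n + 1)) sequentially"
  shows "eventually P sequentially"
proof -
  from E obtain n_e where ne: "\<And>n. n \<ge> n_e \<Longrightarrow> P (2 * n)"
    by (auto simp: eventually_sequentially)
  from O obtain n_o where no: "\<And>n. n \<ge> n_o \<Longrightarrow> P (Suc (2 * n))"
    by (auto simp: eventually_sequentially)
  show ?thesis
    unfolding eventually_sequentially
  proof (intro exI allI impI)
    fix n assume "max (2 * n_e) (2 * n_o + 1) \<le> n" then show "P n"
      using ne no by (cases "even n") (auto elim!: evenE oddE)
  qed
qed

lemma limseq_even_odd:
  assumes "(\<lambda>n. f (2 * n)) \<longlonglongrightarrow> (l :: real)"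
      and "(\<lambda>n. f (2 * n + 1)) \<longlonglongrightarrow> l"
  shows "f \<longlonglongrightarrow> l"
  using assms by (auto simp: filterlim_iff intro: sequentially_even_odd')

locale stmc =
  fixes m n :: nat and rb rw Rth0 :: real
  assumes m1: "m \<ge> 1" and n1: "n \<ge> 1" and rb0: "rb \<ge> 0" and rw0: "rw \<ge> 0"
    and R0pos: "Rth0 > 0" and R0D: "Rth0 > real m * rb + real n * rw"
begin

abbreviation "D \<equiv> real m * rb + real n * rw"
abbreviation "F \<equiv> FF m n rb rw"
abbreviation "T \<equiv> TT m n rb rw Rth0"
abbreviation "d \<equiv> dij rb rw"

lemma D0: "D \<ge> 0" using rb0 rw0 by simp

lemma N0: "real m * real n > 0" using m1 n1 by simp

lemma d_bounds: assumes "i \<in> {1..m}" "j \<in> {1..n}" shows "0 \<le> d i j" "d i j \<le> D"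
proof -
  show "0 \<le> d i j" unfolding dij_def using rb0 rw0 by simp
  have "real i * rb \<le> real m * rb" using assms rb0 by (intro mult_right_mono) auto
  moreover have "real j * rw \<le> real n * rw" using assms rw0 by (intro mult_right_mono) auto
  ultimately show "d i j \<le> D" unfolding dij_def by simp
qed

lemma frac: assumes "R > D" "i \<in> {1..m}" "j \<in> {1..n}"
  shows "0 < 1 - d i j / R" "1 - d i j / R \<le> 1"
proof -
  have R0: "R > 0" using assms D0 by linarith
  have "d i j < R" using d_bounds[OF assms(2,3)] assms by linarith
  thus "0 < 1 - d i j / R" using R0 by simp
  show "1 - d i j / R \<le> 1" using d_bounds[OF assms(2,3)] R0 by simp
qed

lemma F_nonpos: assumes "R > D" shows "F R \<le> 0"
proof -
  have "(\<Sum>i=1..m. \<Sum>j=1..n. ln (1 - d i j / R)) \<le> 0"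
    by (intro sum_nonpos) (use frac[OF assms] in auto)
  thus ?thesis unfolding FF_def using N0
    by (simp add: divide_nonpos_pos)
qed

lemma T_ge: assumes "R > D" shows "T R \<ge> Rth0"
proof -
  have "exp (ln Rth0) \<le> exp (ln Rth0 - F R)" using F_nonpos[OF assms] by simp
  thus ?thesis unfolding TT_def using R0pos by simp
qed

lemma F_mono: assumes "D < R1" "R1 \<le> R2" shows "F R1 \<le> F R2"
proof -
  have "(\<Sum>i=1..m. \<Sum>j=1..n. ln (1 - d i j / R1)) \<le> (\<Sum>i=1..m. \<Sum>j=1..n. ln (1 - d i j / R2))"
  proof (intro sum_mono)
    fix i j assume ij: "i \<in> {1..m}" "j \<in> {1..n}"
    have R1p: "R1 > 0" using assms D0 by linarith
    have "d i j / R2 \<le> d i j / R1"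
      using d_bounds[OF ij] R1p assms by (intro divide_left_mono) auto
    thus "ln (1 - d i j / R1) \<le> ln (1 - d i j / R2)"
      using frac[OF assms(1) ij] by simp
  qed
  thus ?thesis unfolding FF_def using N0 by (intro mult_left_mono) auto
qed

lemma T_anti: assumes "D < R1" "R1 \<le> R2" shows "T R2 \<le> T R1"
  unfolding TT_def using F_mono[OF assms] by simp

lemma T_cont: assumes "R > D" shows "isCont T R"
proof -
  have R0: "R \<noteq> 0" using assms D0 by linarith
  show ?thesis unfolding TT_def FF_def
    by (intro continuous_intros) (use frac(1)[OF assms] R0 in force)+
qed

lemma iter_ge: "stmc_iter m n rb rw Rth0 l \<ge> Rth0"
proof (induction l)
  case 0 thus ?case by simp
next
  case (Suc l) thus ?case unfolding iter_Suc using T_ge R0D by simp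
qed

lemma dsum_split: "(\<Sum>i=1..m. \<Sum>j=1..n. (f i j - g i j :: real)) =
   (\<Sum>i=1..m. \<Sum>j=1..n. f i j) - (\<Sum>i=1..m. \<Sum>j=1..n. g i j)"
  by (simp add: sum_subtractf)

lemma dsum_const: "(\<Sum>i=1..m. \<Sum>j=1..n. (c::real)) = real m * real n * c"
  by simp

lemma cycle_lt: assumes aD: "D < a" and ab: "a < b" and Ta: "T a = b" and Tb: "T b = a"
  shows False
proof (cases "D = 0")
  case True
  have "F R = 0" for R
  proof -
    have "d i j = 0" if "i \<in> {1..m}" "j \<in> {1..n}" for i j using d_bounds[OF that] True by simp
    thus ?thesis unfolding FF_def by simp
  qed
  hence "T R = Rth0" for R unfolding TT_def using R0pos by simp
  thus False using Ta Tb ab by simp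
next
  case False
  hence Dp: "D > 0" using D0 by simp
  have a0: "a > 0" using aD Dp by simp
  have b0: "b > 0" using a0 ab by simp
  have bD: "D < b" using aD ab by simp
  define X where "X = D / a"
  define Y where "Y = D / b"
  have Y0: "0 < Y" unfolding Y_def using Dp b0 by simp
  have YX: "Y < X" unfolding X_def Y_def using Dp a0 ab by (simp add: divide_strict_left_mono)
  have X1: "X < 1" unfolding X_def using aD a0 by simp
  define SA where "SA = (\<Sum>i=1..m. \<Sum>j=1..n. ln (1 - d i j / a))"
  define SB where "SB = (\<Sum>i=1..m. \<Sum>j=1..n. ln (1 - d i j / b))"
  have FA: "F a = SA / (real m * real n)" unfolding FF_def SA_def by simp
  have FB: "F b = SB / (real m * real n)" unfolding FF_def SB_def by simp
  have E1: "ln Rth0 - F a = ln b" using arg_cong[OF Ta, of ln] unfolding TT_def by simp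
  have E2: "ln Rth0 - F b = ln a" using arg_cong[OF Tb, of ln] unfolding TT_def by simp
  have lnX: "ln X = ln D - ln a" unfolding X_def using Dp a0 by (simp add: ln_div)
  have lnY: "ln Y = ln D - ln b" unfolding Y_def using Dp b0 by (simp add: ln_div)
  have eX: "d i j / a = (d i j / D) * X" for i j unfolding X_def using Dp by simp
  have eY: "d i j / b = (d i j / D) * Y" for i j unfolding Y_def using Dp by simp
  have e01: "0 \<le> d i j / D" "d i j / D \<le> 1" if "i \<in> {1..m}" "j \<in> {1..n}" for i j
    using d_bounds[OF that] Dp by auto
  have XY: "X + Y \<ge> 1"
  proof (rule ccontr)
    assume "\<not> X + Y \<ge> 1"
    hence lt: "X + Y < 1" by simp
    have tm: "ln Y - ln X < ln (1 - d i j / a) - ln (1 - d i j / b)"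
      if ij: "i \<in> {1..m}" "j \<in> {1..n}" for i j
    proof -
      define e where "e = d i j / D"
      have e0: "0 \<le> e" "e \<le> 1" using e01[OF ij] unfolding e_def by auto
      have pX: "0 < 1 - e * X" using frac(1)[OF aD ij] eX[of i j] unfolding e_def by simp
      have pY: "0 < 1 - e * Y" using frac(1)[OF bD ij] eY[of i j] unfolding e_def by simp
      have "e * (X + Y) \<le> X + Y" using e0 X1 Y0 YX by (intro mult_left_le_one_le) auto
      hence "0 < 1 - e * (X + Y)" using lt by simp
      hence "0 < (X - Y) * (1 - e * (X + Y))" using YX by simp
      hence "Y * (1 - e * Y) < X * (1 - e * X)" by (simp add: algebra_simps)
      hence "ln (Y * (1 - e * Y)) < ln (X * (1 - e * X))"
        using Y0 pY by (metis ln_less_cancel_iff mult_pos_pos order.strict_trans)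
      hence "ln Y + ln (1 - e * Y) < ln X + ln (1 - e * X)"
        using Y0 YX pX pY by (simp add: ln_mult)
      thus ?thesis using eX[of i j] eY[of i j] unfolding e_def by simp
    qed
    have "(\<Sum>i=1..m. \<Sum>j=1..n. (ln Y - ln X)) < (\<Sum>i=1..m. \<Sum>j=1..n. (ln (1 - d i j / a) - ln (1 - d i j / b)))"
      using m1 n1 by (intro sum_strict_mono) (auto intro: tm)
    hence "real m * real n * (ln Y - ln X) < SA - SB"
      unfolding SA_def SB_def by (simp only: dsum_split dsum_const right_diff_distrib)
    moreover have "SA - SB = real m * real n * (F a - F b)" using FA FB m1 n1 by (simp add: field_simps)
    moreover have "F a - F b = ln Y - ln X" using E1 E2 lnX lnY by simp
    ultimately show False by simp
  qed
  have "(\<Sum>i=1..m. \<Sum>j=1..n. ln X * ln (1 - d i j / a)) \<le> (\<Sum>i=1..m. \<Sum>j=1..n. ln Y * ln (1 - d i j / b))"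
  proof (intro sum_mono)
    fix i j assume ij: "i \<in> {1..m}" "j \<in> {1..n}"
    show "ln X * ln (1 - d i j / a) \<le> ln Y * ln (1 - d i j / b)"
      unfolding eX eY using key_ineq[OF Y0 YX X1 XY e01[OF ij]] .
  qed
  hence "ln X * SA \<le> ln Y * SB" unfolding SA_def SB_def by (simp add: sum_distrib_left)
  hence "ln X * F a \<le> ln Y * F b" unfolding FA FB using N0
    by (simp add: divide_right_mono)
  moreover have "F a = (ln Rth0 - ln D) + ln Y" using E1 lnY by simp
  moreover have "F b = (ln Rth0 - ln D) + ln X" using E2 lnX by simp
  ultimately have "(ln Rth0 - ln D) * (ln X - ln Y) \<le> 0" by (simp add: algebra_simps)
  moreover have "ln Rth0 - ln D > 0" using Dp R0D by simp
  moreover have "ln X - ln Y > 0" using Y0 YX by simp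
  ultimately show False by (simp add: mult_le_0_iff)
qed

lemma cycle: assumes "D < a" "D < b" "T a = b" "T b = a" shows "a = b"
  using cycle_lt[of a b] cycle_lt[of b a] assms by (cases a b rule: linorder_cases) auto

lemma fix_eq: assumes aD: "D < a" and Ta: "T a = a"
  shows "ln Rth0 = (1 / (real m * real n)) * (\<Sum>i=1..m. \<Sum>j=1..n. ln (a - d i j))"
proof -
  have a0: "a > 0" using aD D0 by simp
  have E: "ln Rth0 - F a = ln a" using arg_cong[OF Ta, of ln] unfolding TT_def by simp
  have "(\<Sum>i=1..m. \<Sum>j=1..n. ln (a - d i j)) = (\<Sum>i=1..m. \<Sum>j=1..n. (ln a + ln (1 - d i j / a)))"
  proof (intro sum.cong refl)
    fix i j assume ij: "i \<in> {1..m}" "j \<in> {1..n}"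
    have "a - d i j = a * (1 - d i j / a)" using a0 by (simp add: field_simps)
    thus "ln (a - d i j) = ln a + ln (1 - d i j / a)" using a0 frac(1)[OF aD ij] by (simp add: ln_mult)
  qed
  also have "\<dots> = real m * real n * ln a + (\<Sum>i=1..m. \<Sum>j=1..n. ln (1 - d i j / a))"
    by (simp add: sum.distrib)
  finally show ?thesis using E m1 n1 unfolding FF_def by (simp add: field_simps)
qed

lemma main_conv: "\<exists>a. a > D \<and> T a = a \<and> (stmc_iter m n rb rw Rth0 \<longlonglongrightarrow> a)"
proof -
  define R where "R = stmc_iter m n rb rw Rth0"
  have RS: "R (Suc l) = T (R l)" for l unfolding R_def by (rule iter_Suc)
  have Rge: "R l \<ge> Rth0" for l unfolding R_def by (rule iter_ge)
  have RD: "R l > D" for l using Rge[of l] R0D by linarith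
  define E where "E k = R (2 * k)" for k
  define Od where "Od k = R (2 * k + 1)" for k
  have OE: "Od k = T (E k)" for k unfolding Od_def E_def using RS by simp
  have EO: "E (Suc k) = T (Od k)" for k unfolding Od_def E_def using RS[of "2*k+1"] by simp
  have ED: "D < E k" for k unfolding E_def by (rule RD)
  have OD: "D < Od k" for k unfolding Od_def by (rule RD)
  have inc: "E k \<le> E (Suc k)" for k
  proof (induction k)
    case 0 show ?case unfolding E_def using Rge[of 2] by (simp add: R_def)
  next
    case (Suc k)
    have "Od (Suc k) \<le> Od k" unfolding OE using T_anti[OF ED Suc] .
    hence "T (Od k) \<le> T (Od (Suc k))" using T_anti[OF OD] by blast
    thus ?case unfolding EO by simp
  qed
  have dec: "Od (Suc k) \<le> Od k" for k unfolding OE using T_anti[OF ED inc] .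
  have bnd: "R l \<le> T Rth0" for l
  proof (cases l)
    case 0 thus ?thesis unfolding R_def using T_ge R0D by simp
  next
    case (Suc k) thus ?thesis using RS T_anti[OF R0D Rge[of k]] by simp
  qed
  have Elim: "E \<longlonglongrightarrow> (SUP i. E i)"
    by (intro LIMSEQ_incseq_SUP incseq_SucI inc) (auto simp: E_def intro: bdd_aboveI bnd)
  have Olim: "Od \<longlonglongrightarrow> (INF i. Od i)"
    by (intro LIMSEQ_decseq_INF decseq_SucI dec) (auto simp: Od_def intro!: bdd_belowI[where m = Rth0] Rge)
  define a where "a = (SUP i. E i)"
  define b where "b = (INF i. Od i)"
  have aR: "Rth0 \<le> a" unfolding a_def using Elim by (rule LIMSEQ_le_const) (auto simp: E_def Rge)
  have bR: "Rth0 \<le> b" unfolding b_def using Olim by (rule LIMSEQ_le_const) (auto simp: Od_def Rge)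
  have aD: "D < a" using aR R0D by simp
  have bD: "D < b" using bR R0D by simp
  have "(\<lambda>k. T (E k)) \<longlonglongrightarrow> T a"
    using isCont_tendsto_compose[OF T_cont[OF aD] Elim[folded a_def]] .
  hence "Od \<longlonglongrightarrow> T a" unfolding OE[symmetric] .
  hence Tab: "T a = b" using Olim[folded b_def] LIMSEQ_unique by blast
  have "(\<lambda>k. T (Od k)) \<longlonglongrightarrow> T b"
    using isCont_tendsto_compose[OF T_cont[OF bD] Olim[folded b_def]] .
  hence "(\<lambda>k. E (Suc k)) \<longlonglongrightarrow> T b" unfolding EO .
  hence Tba: "T b = a" using Elim[folded a_def, THEN LIMSEQ_Suc] LIMSEQ_unique by blast
  have ab: "a = b" using cycle[OF aD bD Tab Tba] .
  have "R \<longlonglongrightarrow> a"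
  proof (rule limseq_even_odd)
    show "(\<lambda>k. R (2 * k)) \<longlonglongrightarrow> a" using Elim[folded a_def] unfolding E_def .
    show "(\<lambda>k. R (2 * k + 1)) \<longlonglongrightarrow> a" using Olim[folded b_def] unfolding Od_def ab .
  qed
  moreover have "T a = a" using Tab ab by simp
  ultimately show ?thesis using aD unfolding R_def by (intro exI[of _ a]) simp
qed

end

theorem lemma1:
  fixes m n :: nat and rb rw Rth0 :: real
  assumes "m \<ge> 1" and "n \<ge> 1" and "rb \<ge> 0" and "rw \<ge> 0"
    and "Rth0 > 0" and "Rth0 > real m * rb + real n * rw"
  shows "(\<forall>l. stmc_iter m n rb rw Rth0 l > real m * rb + real n * rw) \<and>
    (\<exists>Rarr. Rarr > real m * rb + real n * rw \<and>
       ln Rth0 = (1 / (real m * real n)) * (\<Sum>i=1..m. \<Sum>j=1..n. ln (Rarr - dij rb rw i j)) \<and>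
       (stmc_iter m n rb rw Rth0 \<longlonglongrightarrow> Rarr))"
proof -
  interpret stmc m n rb rw Rth0 using assms by unfold_locales
  have "\<forall>l. stmc_iter m n rb rw Rth0 l > D" using iter_ge assms(6) by (metis order_less_le_trans)
  moreover obtain a where "a > D" "T a = a" "stmc_iter m n rb rw Rth0 \<longlonglongrightarrow> a"
    using main_conv by blast
  ultimately show ?thesis using fix_eq by blast
qed

end
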